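(* Let $n\ge1$ and let $\mathcal{T}_n$ be the set of complete monotone triangles with $n$ rows. For $A=(a_{i,j})\in\mathcal{T}_n$ define arrays $\mathrm{AD}(A)=(b_{i,j})$, $\mathrm{R}(A)=(c_{i,j})$ and $\mathrm{H}(A)=(d_{i,j})$, $1\le i\le j\le n$, by: $b_{i,j}$ = the number of entries $x$ of the $j$-th SE-diagonal of $A$ with $x\ge i$; $c_{i,j}$ = the number of entries $x$ of the $(n+1-j)$-th NE-diagonal of $A$ with $x\le n+1-i$; $\mathrm{H}(A)$ is the array determined by the condition that for every $i\in\{1,\ldots,n\}$, $\{a_{i,i},a_{i,i+1},\ldots,a_{i,n}\}\cup\{d_{n+2-i,n+2-i},d_{n+2-i,n+3-i},\ldots,d_{n+2-i,n}\}=\{1,2,\ldots,n\}$ (for $i=1$ the second set is empty). Then $\mathrm{AD}$, $\mathrm{R}$ and $\mathrm{H}$ are well-defined permutations of $\mathcal{T}_n$, and $\mathrm{AD}=\mathrm{H}\circ\mathrm{R}$.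
   Context: A monotone triangle with $n$ rows is an array of integers $(a_{i,j})_{1\le i\le j\le n}$ such that $a_{i,j}\le a_{i+1,j+1}$ for $1\le i\le j<n$, $a_{i,j}\le a_{i-1,j}$ for $1<i\le j\le n$, and $a_{i,j}<a_{i,j+1}$ for $1\le i\le j\le n-1$. Its $i$-th row (counted from the bottom) is $(a_{i,i},\ldots,a_{i,n})$. It is complete if its bottom row $(a_{1,1},\ldots,a_{1,n})$ equals $(1,2,\ldots,n)$. For $1\le l\le n$, the $l$-th SE-diagonal of $(a_{i,j})$ is the sequence $(a_{l,l},a_{l-1,l},\ldots,a_{1,l})$, and the $l$-th NE-diagonal is the sequence $(a_{1,l},a_{2,l+1},\ldots,a_{n-l+1,n})$. *)

theory Defs
  imports Main
begin

text \<open>Triangular arrays are functions nat => nat => int; only the entries at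
positions 1 <= i <= j <= n are meaningful, all other values are normalised to 0.\<close>

definition in_tri :: "nat \<Rightarrow> nat \<Rightarrow> nat \<Rightarrow> bool" where
  "in_tri n i j \<longleftrightarrow> 1 \<le> i \<and> i \<le> j \<and> j \<le> n"

definition monotone_triangle :: "nat \<Rightarrow> (nat \<Rightarrow> nat \<Rightarrow> int) \<Rightarrow> bool" where
  "monotone_triangle n a \<longleftrightarrow>
     (\<forall>i j. 1 \<le> i \<and> i \<le> j \<and> j < n \<longrightarrow> a i j \<le> a (i+1) (j+1)) \<and>
     (\<forall>i j. 1 < i \<and> i \<le> j \<and> j \<le> n \<longrightarrow> a i j \<le> a (i-1) j) \<and>
     (\<forall>i j. 1 \<le> i \<and> i \<le> j \<and> j \<le> n - 1 \<longrightarrow> a i j < a i (j+1))"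

definition complete_mt :: "nat \<Rightarrow> (nat \<Rightarrow> nat \<Rightarrow> int) \<Rightarrow> bool" where
  "complete_mt n a \<longleftrightarrow> (\<forall>j. 1 \<le> j \<and> j \<le> n \<longrightarrow> a 1 j = int j)"

definition CMT :: "nat \<Rightarrow> (nat \<Rightarrow> nat \<Rightarrow> int) set" where
  "CMT n = {a. monotone_triangle n a \<and> complete_mt n a \<and> (\<forall>i j. \<not> in_tri n i j \<longrightarrow> a i j = 0)}"

text \<open>b_{i,j} = #entries x of the j-th SE-diagonal (a_{j,j},...,a_{1,j}) with x >= i.\<close>
definition AD :: "nat \<Rightarrow> (nat \<Rightarrow> nat \<Rightarrow> int) \<Rightarrow> (nat \<Rightarrow> nat \<Rightarrow> int)" where
  "AD n a = (\<lambda>i j. if in_tri n i j then int (card {k \<in> {1..j}. a k j \<ge> int i}) else 0)"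

text \<open>c_{i,j} = #entries x of the (n+1-j)-th NE-diagonal
  (a_{1,l}, a_{2,l+1}, ..., a_{n-l+1,n}), l = n+1-j, with x <= n+1-i.
  Its k-th entry is a_{k, l+k-1} = a_{k, n-j+k}, k = 1..j.\<close>
definition R :: "nat \<Rightarrow> (nat \<Rightarrow> nat \<Rightarrow> int) \<Rightarrow> (nat \<Rightarrow> nat \<Rightarrow> int)" where
  "R n a = (\<lambda>i j. if in_tri n i j
      then int (card {k \<in> {1..j}. a k (n - j + k) \<le> int (n + 1 - i)}) else 0)"

definition H_cond :: "nat \<Rightarrow> (nat \<Rightarrow> nat \<Rightarrow> int) \<Rightarrow> (nat \<Rightarrow> nat \<Rightarrow> int) \<Rightarrow> bool" where
  "H_cond n a d \<longleftrightarrow> (\<forall>i \<in> {1..n}.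
      (\<lambda>k. a i k) ` {i..n} \<union> (\<lambda>k. d (n + 2 - i) k) ` {n + 2 - i..n} = int ` {1..n})"

definition H :: "nat \<Rightarrow> (nat \<Rightarrow> nat \<Rightarrow> int) \<Rightarrow> (nat \<Rightarrow> nat \<Rightarrow> int)" where
  "H n a = (THE d. d \<in> CMT n \<and> H_cond n a d)"

end

theory Submission imports Defs begin

lemma mt1: "monotone_triangle n a \<Longrightarrow> 1 \<le> i \<Longrightarrow> i \<le> j \<Longrightarrow> j < n \<Longrightarrow> a i j \<le> a (i+1) (j+1)"
  by (simp add: monotone_triangle_def)
lemma mt2: "monotone_triangle n a \<Longrightarrow> 1 < i \<Longrightarrow> i \<le> j \<Longrightarrow> j \<le> n \<Longrightarrow> a i j \<le> a (i-1) j"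
  by (simp add: monotone_triangle_def)
lemma mt3: "monotone_triangle n a \<Longrightarrow> 1 \<le> i \<Longrightarrow> i \<le> j \<Longrightarrow> j < n \<Longrightarrow> a i j < a i (j+1)"
  by (simp add: monotone_triangle_def)

lemma cmtD:
  assumes "a \<in> CMT n"
  shows "monotone_triangle n a" "\<And>j. 1 \<le> j \<Longrightarrow> j \<le> n \<Longrightarrow> a 1 j = int j"
    "\<And>i j. \<not> in_tri n i j \<Longrightarrow> a i j = 0"
  using assms by (auto simp: CMT_def complete_mt_def)

lemma mt_col:
  assumes mt: "monotone_triangle n a" and "1 \<le> t" "t \<le> t'" "t' \<le> j" "j \<le> n"
  shows "a t' j \<le> a t j"
proof -
  obtain d where d: "t' = t + d" using assms(3) le_Suc_ex by blast
  have "t + d \<le> j \<Longrightarrow> a (t+d) j \<le> a t j"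
  proof (induction d)
    case 0 show ?case by simp
  next
    case (Suc d)
    have "a (t + Suc d) j \<le> a (t + Suc d - 1) j"
      using mt2[OF mt, of "t + Suc d" j] Suc.prems assms by simp
    then show ?case using Suc by simp
  qed
  then show ?thesis using d assms by simp
qed

lemma mt_diag0:
  assumes mt: "monotone_triangle n a" and "1 \<le> t" "t \<le> j" 
  shows "j + d \<le> n \<Longrightarrow> a t j \<le> a (t+d) (j+d)"
proof (induction d)
  case 0 show ?case by simp
next
  case (Suc d)
  have "a (t + d) (j+d) \<le> a (t + d + 1) (j + d + 1)"
    using mt1[OF mt, of "t + d" "j+d"] Suc.prems assms by simp
  then show ?case using Suc by simp
qed

lemma mt_diag:
  assumes mt: "monotone_triangle n a" and "1 \<le> t" "t \<le> t'" "t \<le> j" "j \<le> j'" "j' - j = t' - t" "j' \<le> n"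
  shows "a t j \<le> a t' j'"
proof -
  have e: "j + (t' - t) = j'" "t + (t' - t) = t'" using assms by arith+
  show ?thesis using mt_diag0[OF mt assms(2,4), of "t' - t"] assms(7) unfolding e by simp
qed

lemma mt_row:
  assumes mt: "monotone_triangle n a" and "1 \<le> t" "t \<le> j" "j < j'" "j' \<le> n"
  shows "a t j < a t j'"
proof -
  obtain d where d: "j' = j + Suc d" using assms(4) less_iff_Suc_add by auto
  have "j + Suc d \<le> n \<Longrightarrow> a t j < a t (j + Suc d)"
  proof (induction d)
    case 0 show ?case using mt3[OF mt, of t j] 0 assms by simp
  next
    case (Suc d)
    have "a t (j + Suc d) < a t (j + Suc d + 1)"
      using mt3[OF mt, of t "j + Suc d"] Suc.prems assms by simp
    then show ?case using Suc by simp
  qed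
  then show ?thesis using d assms by simp
qed

lemma cmt_range:
  assumes "a \<in> CMT n" "in_tri n t j"
  shows "int (j - t + 1) \<le> a t j" "a t j \<le> int j"
proof -
  note c = cmtD[OF assms(1)]
  have "a t j \<le> a 1 j" using mt_col[OF c(1), of 1 t j] assms(2) by (simp add: in_tri_def)
  then show "a t j \<le> int j" using c(2)[of j] assms(2) by (simp add: in_tri_def)
  have h: "1 \<le> t" "t \<le> j" "j \<le> n" using assms(2) by (auto simp: in_tri_def)
  have "a 1 (j - t + 1) \<le> a t j"
  proof (rule mt_diag[OF c(1)])
    show "j - (j - t + 1) = t - 1" using h by simp
  qed (use h in simp_all)
  moreover have "a 1 (j - t + 1) = int (j - t + 1)" using c(2)[of "j-t+1"] h by simp
  ultimately show "int (j - t + 1) \<le> a t j" by linarith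
qed

lemma cmt_range2:
  assumes "a \<in> CMT n" "in_tri n t j"
  shows "1 \<le> a t j" "a t j \<le> int n" "a t j \<in> int ` {1..n}"
proof -
  show 1: "1 \<le> a t j" using cmt_range(1)[OF assms] assms(2) by (simp add: in_tri_def)
  show 2: "a t j \<le> int n" using cmt_range(2)[OF assms] assms(2) by (simp add: in_tri_def)
  have "a t j = int (nat (a t j))" using 1 by simp
  moreover have "nat (a t j) \<in> {1..n}" using 1 2 by auto
  ultimately show "a t j \<in> int ` {1..n}" by blast
qed

lemma downclosed:
  fixes m :: nat
  assumes "\<And>t t'. 1 \<le> t' \<Longrightarrow> t' \<le> t \<Longrightarrow> t \<le> m \<Longrightarrow> P t \<Longrightarrow> P t'"
  shows "\<exists>p\<le>m. {t\<in>{1..m}. P t} = {1..p}"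
  using assms
proof (induction m)
  case 0 then show ?case by auto
next
  case (Suc m)
  then obtain p where p: "p \<le> m" "{t\<in>{1..m}. P t} = {1..p}" by force
  show ?case
  proof (cases "P (Suc m)")
    case True
    then have "{t\<in>{1..Suc m}. P t} = {1..Suc m}" using Suc.prems by auto
    then show ?thesis by blast
  next
    case False
    then have "{t\<in>{1..Suc m}. P t} = {t\<in>{1..m}. P t}" by (auto simp: le_Suc_eq)
    then show ?thesis using p by (intro exI[of _ p]) auto
  qed
qed

lemma downclosed_card:
  fixes m :: nat
  assumes "\<And>t t'. 1 \<le> t' \<Longrightarrow> t' \<le> t \<Longrightarrow> t \<le> m \<Longrightarrow> P t \<Longrightarrow> P t'" "1 \<le> t" "t \<le> m"
  shows "P t \<longleftrightarrow> t \<le> card {t\<in>{1..m}. P t}"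
proof -
  have "\<exists>p\<le>m. {t\<in>{1..m}. P t} = {1..p}" by (rule downclosed[of m P, OF assms(1)])
  then obtain p where p: "p \<le> m" "{t\<in>{1..m}. P t} = {1..p}" by blast
  have c: "card {t\<in>{1..m}. P t} = p" unfolding p(2) by simp
  have "P t \<longleftrightarrow> t \<in> {t\<in>{1..m}. P t}" using assms(2,3) by simp
  also have "\<dots> \<longleftrightarrow> t \<le> p" unfolding p(2) using assms(2) by simp
  finally show ?thesis unfolding c .
qed


lemma AD_in: "in_tri n i j \<Longrightarrow> AD n a i j = int (card {k \<in> {1..j}. a k j \<ge> int i})"
  by (simp add: AD_def)
lemma R_in: "in_tri n i j \<Longrightarrow> R n a i j = int (card {k \<in> {1..j}. a k (n - j + k) \<le> int (n + 1 - i)})"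
  by (simp add: R_def)

lemma card_shift_lt:
  fixes S T :: "nat set"
  assumes "S \<subseteq> {1..j}" "insert 1 (Suc ` S) \<subseteq> T" "finite T"
  shows "card S < card T"
proof -
  have "finite S" using assms(1) finite_subset by blast
  have "1 \<notin> Suc ` S" using assms(1) by auto
  then have "card (insert 1 (Suc ` S)) = Suc (card (Suc ` S))"
    using \<open>finite S\<close> by simp
  also have "card (Suc ` S) = card S" by (simp add: card_image)
  finally have "card (insert 1 (Suc ` S)) = Suc (card S)" .
  moreover have "card (insert 1 (Suc ` S)) \<le> card T" using assms(2,3) card_mono by blast
  ultimately show ?thesis by simp
qed

lemma AD_cmt:
  assumes a: "a \<in> CMT n"
  shows "AD n a \<in> CMT n"
proof -
  note c = cmtD[OF a]
  have p1: "AD n a i j \<le> AD n a (i+1) (j+1)" if h: "1 \<le> i" "i \<le> j" "j < n" for i j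
  proof -
    have "{k \<in> {1..j}. a k j \<ge> int i} \<subseteq> {k \<in> {1..j+1}. a k (j+1) \<ge> int (i+1)}"
    proof
      fix k assume k: "k \<in> {k \<in> {1..j}. a k j \<ge> int i}"
      have "a k j < a k (j+1)" using mt_row[OF c(1), of k j "j+1"] k h by auto
      then show "k \<in> {k \<in> {1..j+1}. a k (j+1) \<ge> int (i+1)}" using k by auto
    qed
    then have "card {k \<in> {1..j}. a k j \<ge> int i} \<le> card {k \<in> {1..j+1}. a k (j+1) \<ge> int (i+1)}"
      by (intro card_mono) auto
    then show ?thesis using h by (simp add: AD_in in_tri_def)
  qed
  have p2: "AD n a i j \<le> AD n a (i-1) j" if h: "1 < i" "i \<le> j" "j \<le> n" for i j
  proof -
    have "card {k \<in> {1..j}. a k j \<ge> int i} \<le> card {k \<in> {1..j}. a k j \<ge> int (i-1)}"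
      using h by (intro card_mono) auto
    moreover have "in_tri n i j" "in_tri n (i-1) j" using h by (auto simp: in_tri_def)
    ultimately show ?thesis by (simp only: AD_in)
  qed
  have p3: "AD n a i j < AD n a i (j+1)" if h: "1 \<le> i" "i \<le> j" "j \<le> n - 1" for i j
  proof -
    have "card {k \<in> {1..j}. a k j \<ge> int i} < card {k \<in> {1..j+1}. a k (j+1) \<ge> int i}"
    proof (rule card_shift_lt)
      show "insert 1 (Suc ` {k \<in> {1..j}. a k j \<ge> int i}) \<subseteq> {k \<in> {1..j+1}. a k (j+1) \<ge> int i}"
      proof
        fix x assume "x \<in> insert 1 (Suc ` {k \<in> {1..j}. a k j \<ge> int i})"
        then consider "x = 1" | k where "x = Suc k" "k \<in> {1..j}" "a k j \<ge> int i" by auto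
        then show "x \<in> {k \<in> {1..j+1}. a k (j+1) \<ge> int i}"
        proof cases
          case 1 then show ?thesis using c(2)[of "j+1"] h by auto
        next
          case 2
          have "a k j \<le> a (k+1) (j+1)" using mt1[OF c(1), of k j] 2 h by auto
          then show ?thesis using 2 by auto
        qed
      qed
    qed auto
    then show ?thesis using h by (simp add: AD_in in_tri_def)
  qed
  have p4: "AD n a 1 j = int j" if h: "1 \<le> j" "j \<le> n" for j
  proof -
    have "{k \<in> {1..j}. a k j \<ge> int 1} = {1..j}"
      using cmt_range2(1)[OF a] h by (auto simp: in_tri_def)
    then show ?thesis using h by (simp add: AD_in in_tri_def)
  qed
  have m: "monotone_triangle n (AD n a)" unfolding monotone_triangle_def
    using p1 p2 p3 by blast
  have cp: "complete_mt n (AD n a)" unfolding complete_mt_def using p4 by simp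
  have z: "\<forall>i j. \<not> in_tri n i j \<longrightarrow> AD n a i j = 0" by (simp add: AD_def)
  show ?thesis unfolding CMT_def using m cp z by blast
qed

lemma R_cmt:
  assumes a: "a \<in> CMT n"
  shows "R n a \<in> CMT n"
proof -
  note c = cmtD[OF a]
  have p1: "R n a i j \<le> R n a (i+1) (j+1)" if h: "1 \<le> i" "i \<le> j" "j < n" for i j
  proof -
    have "{k \<in> {1..j}. a k (n - j + k) \<le> int (n + 1 - i)} \<subseteq> {k \<in> {1..j+1}. a k (n - (j+1) + k) \<le> int (n + 1 - (i+1))}"
    proof
      fix k assume k: "k \<in> {k \<in> {1..j}. a k (n - j + k) \<le> int (n + 1 - i)}"
      have e: "n - (j+1) + k + 1 = n - j + k" using h k by auto
      have "a k (n - (j+1) + k) < a k (n - (j+1) + k + 1)"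
        using mt3[OF c(1), of k "n - (j+1) + k"] k h by auto
      then have "a k (n - (j+1) + k) < a k (n - j + k)" unfolding e .
      then show "k \<in> {k \<in> {1..j+1}. a k (n - (j+1) + k) \<le> int (n + 1 - (i+1))}" using k h by auto
    qed
    then have "card {k \<in> {1..j}. a k (n - j + k) \<le> int (n + 1 - i)} \<le> card {k \<in> {1..j+1}. a k (n - (j+1) + k) \<le> int (n + 1 - (i+1))}"
      by (intro card_mono) auto
    then show ?thesis using h by (simp add: R_in in_tri_def)
  qed
  have p2: "R n a i j \<le> R n a (i-1) j" if h: "1 < i" "i \<le> j" "j \<le> n" for i j
  proof -
    have "card {k \<in> {1..j}. a k (n - j + k) \<le> int (n + 1 - i)} \<le> card {k \<in> {1..j}. a k (n - j + k) \<le> int (n + 1 - (i-1))}"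
      using h by (intro card_mono) auto
    moreover have "in_tri n i j" "in_tri n (i-1) j" using h by (auto simp: in_tri_def)
    ultimately show ?thesis by (simp only: R_in)
  qed
  have p3: "R n a i j < R n a i (j+1)" if h: "1 \<le> i" "i \<le> j" "j \<le> n - 1" for i j
  proof -
    have "card {k \<in> {1..j}. a k (n - j + k) \<le> int (n + 1 - i)} < card {k \<in> {1..j+1}. a k (n - (j+1) + k) \<le> int (n + 1 - i)}"
    proof (rule card_shift_lt)
      show "insert 1 (Suc ` {k \<in> {1..j}. a k (n - j + k) \<le> int (n + 1 - i)}) \<subseteq> {k \<in> {1..j+1}. a k (n - (j+1) + k) \<le> int (n + 1 - i)}"
      proof
        fix x assume "x \<in> insert 1 (Suc ` {k \<in> {1..j}. a k (n - j + k) \<le> int (n + 1 - i)})"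
        then consider "x = 1" | k where "x = Suc k" "k \<in> {1..j}" "a k (n - j + k) \<le> int (n + 1 - i)" by auto
        then show "x \<in> {k \<in> {1..j+1}. a k (n - (j+1) + k) \<le> int (n + 1 - i)}"
        proof cases
          case 1
          have "a 1 (n - j) = int (n - j)" using c(2)[of "n - j"] h by auto
          then show ?thesis using 1 h by auto
        next
          case 2
          have e: "n - (j+1) + Suc k = n - j + k" using h 2 by auto
          have "a (Suc k) (n - j + k) \<le> a (Suc k - 1) (n - j + k)"
            using mt2[OF c(1), of "Suc k" "n - j + k"] 2 h by auto
          then show ?thesis using 2 h unfolding e by auto
        qed
      qed
    qed auto
    then show ?thesis using h by (simp add: R_in in_tri_def)
  qed
  have p4: "R n a 1 j = int j" if h: "1 \<le> j" "j \<le> n" for j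
  proof -
    have "{k \<in> {1..j}. a k (n - j + k) \<le> int (n + 1 - 1)} = {1..j}"
    proof -
      have "a k (n - j + k) \<le> int n" if "k \<in> {1..j}" for k
      proof -
        have "in_tri n k (n - j + k)" unfolding in_tri_def using h that by auto
        then show ?thesis using cmt_range2(2)[OF a] by blast
      qed
      then show ?thesis by auto
    qed
    then show ?thesis using h by (simp add: R_in in_tri_def)
  qed
  have m: "monotone_triangle n (R n a)" unfolding monotone_triangle_def
    using p1 p2 p3 by blast
  have cp: "complete_mt n (R n a)" unfolding complete_mt_def using p4 by simp
  have z: "\<forall>i j. \<not> in_tri n i j \<longrightarrow> R n a i j = 0" by (simp add: R_def)
  show ?thesis unfolding CMT_def using m cp z by blast
qed

lemma AD_AD:
  assumes a: "a \<in> CMT n"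
  shows "AD n (AD n a) = a"
proof (intro ext)
  fix t j
  note c = cmtD[OF a]
  show "AD n (AD n a) t j = a t j"
  proof (cases "in_tri n t j")
    case False then show ?thesis using c(3) by (simp add: AD_def)
  next
    case True
    then have h: "1 \<le> t" "t \<le> j" "j \<le> n" by (auto simp: in_tri_def)
    have eq: "(AD n a i j \<ge> int t) \<longleftrightarrow> a t j \<ge> int i" if i: "i \<in> {1..j}" for i
    proof -
      have "a t j \<ge> int i \<longleftrightarrow> t \<le> card {k \<in> {1..j}. a k j \<ge> int i}"
      proof (rule downclosed_card[where P = "\<lambda>k. a k j \<ge> int i"])
        fix k k' assume "1 \<le> k'" "k' \<le> k" "k \<le> j" "int i \<le> a k j"
        then show "int i \<le> a k' j" using mt_col[OF c(1), of k' k j] h by auto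
      qed (use h in auto)
      then show ?thesis using i h by (simp add: AD_in in_tri_def)
    qed
    have "{i \<in> {1..j}. AD n a i j \<ge> int t} = {i \<in> {1..j}. a t j \<ge> int i}" using eq by auto
    also have "\<dots> = {1..nat (a t j)}" using cmt_range[OF a True] h by auto
    finally have "AD n (AD n a) t j = int (card {1..nat (a t j)})" using True by (simp add: AD_in)
    then show ?thesis using cmt_range2(1)[OF a True] by simp
  qed
qed


lemma strict_inj:
  fixes f :: "nat \<Rightarrow> int"
  assumes "\<And>k k'. m \<le> k \<Longrightarrow> k < k' \<Longrightarrow> k' \<le> n \<Longrightarrow> f k < f k'"
  shows "inj_on f {m..n}"
proof (rule inj_onI)
  fix x y assume xy: "x \<in> {m..n}" "y \<in> {m..n}" "f x = f y"
  show "x = y"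
  proof (rule ccontr)
    assume "x \<noteq> y"
    then consider "x < y" | "y < x" by linarith
    then show False
    proof cases
      case 1 then show False using assms[of x y] xy by auto
    next
      case 2 then show False using assms[of y x] xy by auto
    qed
  qed
qed

lemma strict_row_eq:
  fixes f g :: "nat \<Rightarrow> int"
  assumes sf: "\<And>k k'. m \<le> k \<Longrightarrow> k < k' \<Longrightarrow> k' \<le> n \<Longrightarrow> f k < f k'"
    and sg: "\<And>k k'. m \<le> k \<Longrightarrow> k < k' \<Longrightarrow> k' \<le> n \<Longrightarrow> g k < g k'"
    and img: "f ` {m..n} = g ` {m..n}"
  shows "k \<in> {m..n} \<Longrightarrow> f k = g k"
proof (induction k rule: less_induct)
  case (less k)
  have "f k \<in> g ` {m..n}" using img less.prems by blast
  then obtain k1 where k1: "k1 \<in> {m..n}" "f k = g k1" by blast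
  have A: "g k \<le> f k"
  proof (cases "k1 < k")
    case True
    then have "g k1 = f k1" using less.IH[of k1] k1 by auto
    then have False using sf[of k1 k] k1 True less.prems by auto
    then show ?thesis ..
  next
    case False
    then have "k = k1 \<or> k < k1" by auto
    then show ?thesis using sg[of k k1] k1 less.prems by auto
  qed
  have "g k \<in> f ` {m..n}" using img less.prems by blast
  then obtain k2 where k2: "k2 \<in> {m..n}" "g k = f k2" by blast
  have B: "f k \<le> g k"
  proof (cases "k2 < k")
    case True
    then have "f k2 = g k2" using less.IH[of k2] k2 by auto
    then have False using sg[of k2 k] k2 True less.prems by auto
    then show ?thesis ..
  next
    case False
    then have "k = k2 \<or> k < k2" by auto
    then show ?thesis using sf[of k k2] k2 less.prems by auto
  qed
  show ?case using A B by simp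
qed

lemma cmt_rowmono:
  assumes "d \<in> CMT n" "1 \<le> t"
  shows "\<And>k k'. t \<le> k \<Longrightarrow> k < k' \<Longrightarrow> k' \<le> n \<Longrightarrow> d t k < d t k'"
  using mt_row[OF cmtD(1)[OF assms(1)]] assms(2) by blast

lemma row_card:
  assumes "d \<in> CMT n" "1 \<le> t"
  shows "card ((\<lambda>k. d t k) ` {t..n}) = n + 1 - t"
  using card_image[OF strict_inj[OF cmt_rowmono[OF assms]]] by simp

lemma row_sub:
  assumes "d \<in> CMT n" "1 \<le> t"
  shows "(\<lambda>k. d t k) ` {t..n} \<subseteq> int ` {1..n}"
  using cmt_range2(3)[OF assms(1)] assms(2) by (auto simp: in_tri_def)

lemma H_sym:
  assumes d: "d \<in> CMT n" and hc: "H_cond n x d"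
  shows "H_cond n d x"
  unfolding H_cond_def
proof
  fix m assume m: "m \<in> {1..n}"
  show "(\<lambda>k. d m k) ` {m..n} \<union> (\<lambda>k. x (n + 2 - m) k) ` {n + 2 - m..n} = int ` {1..n}"
  proof (cases "m = 1")
    case True
    have "(\<lambda>k. d 1 k) ` {1..n} = int ` {1..n}"
      using cmtD(2)[OF d] by (intro image_cong) auto
    then show ?thesis using True by simp
  next
    case False
    define i where "i = n + 2 - m"
    have i: "i \<in> {1..n}" "n + 2 - i = m" using m False by (auto simp: i_def)
    have "(\<lambda>k. x i k) ` {i..n} \<union> (\<lambda>k. d (n + 2 - i) k) ` {n + 2 - i..n} = int ` {1..n}"
      using hc i(1) unfolding H_cond_def by blast
    note f = this[unfolded i(2), unfolded i_def]
    show ?thesis by (subst Un_commute) (rule f)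
  qed
qed

lemma H_row:
  assumes d: "d \<in> CMT n" and hc: "H_cond n x d" and m: "2 \<le> m" "m \<le> n"
  shows "(\<lambda>k. d m k) ` {m..n} = int ` {1..n} - (\<lambda>k. x (n + 2 - m) k) ` {n + 2 - m..n}"
proof -
  define i where "i = n + 2 - m"
  have i: "i \<in> {1..n}" "n + 2 - i = m" using m by (auto simp: i_def)
  define X where "X = (\<lambda>k. x i k) ` {i..n}"
  define D where "D = (\<lambda>k. d m k) ` {m..n}"
  have "(\<lambda>k. x i k) ` {i..n} \<union> (\<lambda>k. d (n + 2 - i) k) ` {n + 2 - i..n} = int ` {1..n}"
    using hc i(1) unfolding H_cond_def by blast
  then have U: "X \<union> D = int ` {1..n}" unfolding i(2) X_def D_def .
  have cX: "card X \<le> n + 1 - i" unfolding X_def using card_image_le[of "{i..n}" "\<lambda>k. x i k"] by simp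
  have cD: "card D = n + 1 - m" unfolding D_def using row_card[OF d] m by simp
  have cI: "card (int ` {1..n}) = n" by (simp add: card_image)
  have "card (int ` {1..n} - X) = n - card X"
  proof -
    have XS: "X \<subseteq> int ` {1..n}" using U by blast
    have "finite X" unfolding X_def by simp
    then show ?thesis using card_Diff_subset[OF _ XS] cI by simp
  qed
  then have "card D \<le> card (int ` {1..n} - X)" using cX cD i m by (simp add: i_def)
  moreover have "int ` {1..n} - X \<subseteq> D" using U by blast
  moreover have "finite D" unfolding D_def by simp
  ultimately have "int ` {1..n} - X = D" using card_seteq by blast
  then show ?thesis unfolding D_def X_def i_def by simp
qed

lemma H_unique:
  assumes d1: "d1 \<in> CMT n" and d2: "d2 \<in> CMT n" and h1: "H_cond n x d1" and h2: "H_cond n x d2"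
  shows "d1 = d2"
proof (intro ext)
  fix t k
  show "d1 t k = d2 t k"
  proof (cases "in_tri n t k")
    case False then show ?thesis using cmtD(3)[OF d1] cmtD(3)[OF d2] by simp
  next
    case True
    then have h: "1 \<le> t" "t \<le> k" "k \<le> n" by (auto simp: in_tri_def)
    show ?thesis
    proof (cases "t = 1")
      case True then show ?thesis using cmtD(2)[OF d1] cmtD(2)[OF d2] h by simp
    next
      case False
      have "(\<lambda>k. d1 t k) ` {t..n} = (\<lambda>k. d2 t k) ` {t..n}"
        using H_row[OF d1 h1, of t] H_row[OF d2 h2, of t] False h by simp
      then show ?thesis
        using strict_row_eq[where f="\<lambda>k. d1 t k" and g="\<lambda>k. d2 t k" and m=t and n=n and k=k,
            OF cmt_rowmono[OF d1 h(1)] cmt_rowmono[OF d2 h(1)]] h by simp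
    qed
  qed
qed


lemma HRAD:
  assumes a: "a \<in> CMT n"
  shows "H_cond n (R n a) (AD n a)"
  unfolding H_cond_def
proof
  fix i assume i: "i \<in> {1..n}"
  note c = cmtD[OF a]
  have Rc: "R n a \<in> CMT n" by (rule R_cmt[OF a])
  have ADc: "AD n a \<in> CMT n" by (rule AD_cmt[OF a])
  show "(\<lambda>k. R n a i k) ` {i..n} \<union> (\<lambda>k. AD n a (n + 2 - i) k) ` {n + 2 - i..n} = int ` {1..n}"
  proof (cases "i = 1")
    case True
    have "(\<lambda>k. R n a 1 k) ` {1..n} = int ` {1..n}"
      using cmtD(2)[OF Rc] by (intro image_cong) auto
    then show ?thesis using True by simp
  next
    case False
    then have i2: "2 \<le> i" "i \<le> n" using i by auto
    define X where "X = (\<lambda>k. R n a i k) ` {i..n}"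
    define Y where "Y = (\<lambda>k. AD n a (n + 2 - i) k) ` {n + 2 - i..n}"
    have XS: "X \<subseteq> int ` {1..n}" unfolding X_def using row_sub[OF Rc] i2 by simp
    have YS: "Y \<subseteq> int ` {1..n}" unfolding Y_def using row_sub[OF ADc, of "n + 2 - i"] i2 by simp
    have cX: "card X = n + 1 - i" unfolding X_def using row_card[OF Rc] i2 by simp
    have cY: "card Y = n + 1 - (n + 2 - i)" unfolding Y_def using row_card[OF ADc, of "n+2-i"] i2 by simp
    have disj: "X \<inter> Y = {}"
    proof (rule ccontr)
      assume "X \<inter> Y \<noteq> {}"
      then obtain k j where k: "k \<in> {i..n}" and j: "j \<in> {n + 2 - i..n}"
        and eq: "R n a i k = AD n a (n + 2 - i) j" unfolding X_def Y_def by blast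
      define C where "C = {t \<in> {1..k}. a t (n - k + t) \<le> int (n + 1 - i)}"
      define B where "B = {t \<in> {1..j}. a t j \<ge> int (n + 2 - i)}"
      have "in_tri n i k" "in_tri n (n + 2 - i) j" using k j i2 by (auto simp: in_tri_def)
      then have "int (card C) = int (card B)" using eq unfolding C_def B_def by (simp only: R_in AD_in)
      then have cCB: "card C = card B" by simp
      define t0 where "t0 = j + k - n"
      have t0: "1 \<le> t0" "t0 \<le> k" "t0 \<le> j" "n - k + t0 = j" using k j i2 by (auto simp: t0_def)
      have P1: "a t0 (n - k + t0) \<le> int (n + 1 - i) \<longleftrightarrow> t0 \<le> card C" unfolding C_def
      proof (rule downclosed_card[where P = "\<lambda>t. a t (n - k + t) \<le> int (n + 1 - i)"])
        fix t t' assume h: "1 \<le> t'" "t' \<le> t" "t \<le> k" "a t (n - k + t) \<le> int (n + 1 - i)"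
        have "a t' (n - k + t') \<le> a t (n - k + t)"
          by (rule mt_diag[OF c(1)]) (use h k in auto)
        then show "a t' (n - k + t') \<le> int (n + 1 - i)" using h by linarith
      qed (use t0 in auto)
      have P2: "a t0 j \<ge> int (n + 2 - i) \<longleftrightarrow> t0 \<le> card B" unfolding B_def
      proof (rule downclosed_card[where P = "\<lambda>t. a t j \<ge> int (n + 2 - i)"])
        fix t t' assume h: "1 \<le> t'" "t' \<le> t" "t \<le> j" "a t j \<ge> int (n + 2 - i)"
        have "a t j \<le> a t' j" by (rule mt_col[OF c(1)]) (use h j in auto)
        then show "a t' j \<ge> int (n + 2 - i)" using h by linarith
      qed (use t0 in auto)
      have "int (n + 2 - i) = int (n + 1 - i) + 1" using i2 by simp
      then show False using P1 P2 cCB t0(4) by auto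
    qed
    have "card (X \<union> Y) = n"
      using card_Un_disjoint[of X Y] disj cX cY i2 unfolding X_def Y_def by simp
    moreover have "card (int ` {1..n}) = n" by (simp add: card_image)
    ultimately have "X \<union> Y = int ` {1..n}"
      using XS YS by (intro card_subset_eq) auto
    then show ?thesis unfolding X_def Y_def .
  qed
qed

lemma H_exists:
  assumes a: "a \<in> CMT n"
  shows "R n (AD n a) \<in> CMT n \<and> H_cond n a (R n (AD n a))"
proof -
  have "H_cond n (R n (AD n a)) (AD n (AD n a))" by (rule HRAD[OF AD_cmt[OF a]])
  then have "H_cond n (R n (AD n a)) a" using AD_AD[OF a] by simp
  then show ?thesis using H_sym[OF a] R_cmt[OF AD_cmt[OF a]] by blast
qed

lemma H_eq:
  assumes "d \<in> CMT n" "H_cond n x d"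
  shows "H n x = d"
  unfolding H_def
  by (rule the_equality) (use assms H_unique in blast)+

lemma H_val:
  assumes a: "a \<in> CMT n"
  shows "H n a = R n (AD n a)" "H n a \<in> CMT n" "H n (H n a) = a"
proof -
  show 1: "H n a = R n (AD n a)" using H_exists[OF a] H_eq by blast
  show 2: "H n a \<in> CMT n" using H_exists[OF a] 1 by simp
  show "H n (H n a) = a"
    by (rule H_eq[OF a]) (use H_sym[of "R n (AD n a)" n a] H_exists[OF a] 1 in auto)
qed

theorem mainTheorem2:
  fixes n :: nat
  assumes "n \<ge> 1"
  shows "(\<forall>a \<in> CMT n. \<exists>!d. d \<in> CMT n \<and> H_cond n a d)
       \<and> bij_betw (AD n) (CMT n) (CMT n)
       \<and> bij_betw (R n) (CMT n) (CMT n)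
       \<and> bij_betw (H n) (CMT n) (CMT n)
       \<and> (\<forall>a \<in> CMT n. AD n a = H n (R n a))"
proof -
  have E: "\<forall>a \<in> CMT n. \<exists>!d. d \<in> CMT n \<and> H_cond n a d"
    using H_exists H_unique by blast
  have HR: "AD n a = H n (R n a)" if a: "a \<in> CMT n" for a
    using H_eq[OF AD_cmt[OF a] HRAD[OF a]] by simp
  have RH: "R n a = H n (AD n a)" if a: "a \<in> CMT n" for a
    using H_val(3)[OF R_cmt[OF a]] HR[OF a] by simp
  have bAD: "bij_betw (AD n) (CMT n) (CMT n)"
    by (rule bij_betw_byWitness[where f'="AD n"]) (use AD_AD AD_cmt in auto)
  have bH: "bij_betw (H n) (CMT n) (CMT n)"
    by (rule bij_betw_byWitness[where f'="H n"]) (use H_val in auto)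
  have bR: "bij_betw (R n) (CMT n) (CMT n)"
  proof (rule bij_betw_byWitness[where f'="\<lambda>x. AD n (H n x)"])
    have HR': "H n (R n a) = AD n a" if "a \<in> CMT n" for a using HR[OF that] by simp
    show "\<forall>a\<in>CMT n. AD n (H n (R n a)) = a" using HR' AD_AD by simp
    show "\<forall>a'\<in>CMT n. R n (AD n (H n a')) = a'"
      using RH AD_AD AD_cmt H_val by auto
    show "R n ` CMT n \<subseteq> CMT n" using R_cmt by auto
    show "(\<lambda>x. AD n (H n x)) ` CMT n \<subseteq> CMT n" using AD_cmt H_val by auto
  qed
  show ?thesis using E bAD bR bH HR by blast
qed

end
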